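(* Let $\operatorname{sinc}(0)=1$ and $\operatorname{sinc}(t)=\frac{\sin(\pi t)}{\pi t}$ for $t\neq0$, and for a signal $x:\mathbb{R}\to\mathbb{C}$ define the Whittaker cylinder interpolation \[ Fx(t,\varphi)=\sum_{\tau\in\varphi} x(\tau)\operatorname{sinc}(t-\tau):=\lim_{N\to\infty}\sum_{\tau\in\varphi\cap[-N,N]} x(\tau)\operatorname{sinc}(t-\tau). \] Let $a=b+n$ with $n\in\mathbb{Z}$ and $b\in(-\tfrac12,\tfrac12)$, and let $x(t)=\exp(2\pi i\,a t)$. Then for all $t\in\mathbb{R}$ and $\varphi\in\mathbb{T}$, \[ Fx(t,\varphi)=\exp\!\big(2\pi i\,(b\,t+n\,\rho(\varphi))\big). \] Consequently, for any reals $v,\alpha$, the signal $z(t)=Fx(v t, c(\alpha t))$ satisfies $z(t)=\exp\!\big(2\pi i\,(b v+n\alpha)\,t\big)$ for all $t\in\mathbb{R}$.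
   Context: $\mathbb{T}=\mathbb{R}/\mathbb{Z}$; $c:\mathbb{R}\to\mathbb{T}$, $c(p)=p+\mathbb{Z}$; an element $\varphi\in\mathbb{T}$ is regarded as the set of reals $\tau$ with $c(\tau)=\varphi$; $\rho:\mathbb{T}\to[0,1)$ picks the unique representative of $\varphi$ in $[0,1)$. *)

theory Defs
  imports "HOL-Analysis.Analysis"
begin

text \<open>The circle T = R/Z: an element is a coset of Z in R, i.e. a set of reals.\<close>
definition cyl :: "real \<Rightarrow> real set" where
  "cyl p = {\<tau>. \<tau> - p \<in> \<int>}"

definition torus :: "real set set" where
  "torus = range cyl"

definition rho :: "real set \<Rightarrow> real" where
  "rho \<phi> = (THE r. r \<in> \<phi> \<and> 0 \<le> r \<and> r < 1)"

definition sinc :: "real \<Rightarrow> real" where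
  "sinc t = (if t = 0 then 1 else sin (pi * t) / (pi * t))"

definition whittaker_partial :: "(real \<Rightarrow> complex) \<Rightarrow> real \<Rightarrow> real set \<Rightarrow> real \<Rightarrow> complex" where
  "whittaker_partial x t \<phi> N = (\<Sum>\<tau>\<in>\<phi> \<inter> {-N..N}. x \<tau> * complex_of_real (sinc (t - \<tau>)))"

definition whittaker :: "(real \<Rightarrow> complex) \<Rightarrow> real \<Rightarrow> real set \<Rightarrow> complex" where
  "whittaker x t \<phi> = Lim at_top (whittaker_partial x t \<phi>)"

end

theory Submission
  imports Defs "HOL-Real_Asymp.Real_Asymp"
begin


lemma digamma_reflection:
  fixes s :: real assumes s: "s \<notin> \<int>"
  shows "Digamma (1 - s) - Digamma s = pi * cos (pi * s) / sin (pi * s)"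
proof -
  define f where "f x = Gamma x * Gamma (1 - x) * sin (pi * x)" for x :: real
  have sin0: "sin (pi * x) \<noteq> 0" if "x \<notin> \<int>" for x :: real
    using that by (auto simp: sin_zero_iff_int2 mult.commute[of pi])
  have fpi: "f x = pi" if "x \<notin> \<int>" for x :: real
  proof -
    have "Gamma (complex_of_real x) * Gamma (1 - complex_of_real x) = of_real pi / sin (of_real pi * of_real x)"
      by (rule Gamma_reflection_complex)
    hence "complex_of_real (Gamma x * Gamma (1 - x)) = of_real (pi / sin (pi * x))"
      by (simp flip: Gamma_complex_of_real sin_of_real)
    hence "Gamma x * Gamma (1 - x) = pi / sin (pi * x)" using of_real_eq_iff by blast
    thus ?thesis using sin0[OF that] by (simp add: f_def)
  qed
  have ev: "eventually (\<lambda>x. f x = pi) (nhds s)"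
  proof -
    have "eventually (\<lambda>x. x \<in> UNIV - \<int>) (nhds s)"
      using s by (intro eventually_nhds_in_open) (auto simp: open_Diff)
    thus ?thesis by eventually_elim (auto intro: fpi)
  qed
  have d0: "(f has_field_derivative 0) (at s)"
    by (subst DERIV_cong_ev[OF refl ev refl]) (rule DERIV_const)
  have s1: "s \<notin> \<int>\<^sub>\<le>\<^sub>0" using s nonpos_Ints_subset_Ints by blast
  have s2: "1 - s \<notin> \<int>\<^sub>\<le>\<^sub>0"
  proof
    assume "1 - s \<in> \<int>\<^sub>\<le>\<^sub>0"
    hence "1 - s \<in> \<int>" using nonpos_Ints_subset_Ints by blast
    hence "1 - (1 - s) \<in> \<int>" by (intro Ints_diff) auto
    thus False using s by simp
  qed
  have g1: "(Gamma has_field_derivative Gamma s * Digamma s) (at s)"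
    using s1 by (rule has_field_derivative_Gamma)
  have g2: "((\<lambda>x. Gamma (1 - x)) has_field_derivative (Gamma (1 - s) * Digamma (1 - s)) * (-1)) (at s)"
  proof -
    have "(Gamma has_field_derivative Gamma (1 - s) * Digamma (1 - s)) (at (1 - s))"
      using s2 by (rule has_field_derivative_Gamma)
    moreover have "((\<lambda>x. 1 - x) has_field_derivative (-1)) (at s)"
      by (auto intro!: derivative_eq_intros)
    ultimately show ?thesis by (rule DERIV_chain2)
  qed
  have g3: "((\<lambda>x. sin (pi * x)) has_field_derivative cos (pi * s) * pi) (at s)"
    by (auto intro!: derivative_eq_intros)
  note d1 = DERIV_mult[OF DERIV_mult[OF g1 g2] g3]
  from DERIV_unique[OF d1 d0[unfolded f_def]]
  have "Gamma s * Gamma (1 - s) * ((Digamma s - Digamma (1 - s)) * sin (pi * s) + pi * cos (pi * s)) = 0"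
    by (simp add: algebra_simps)
  moreover have "Gamma s \<noteq> 0" "Gamma (1 - s) \<noteq> 0" using s1 s2 by (auto simp: Gamma_eq_zero_iff)
  ultimately have "(Digamma s - Digamma (1 - s)) * sin (pi * s) + pi * cos (pi * s) = 0" by simp
  thus ?thesis using sin0[OF s] by (simp add: field_simps)
qed

lemma sum_sym_Suc:
  "(\<Sum>k\<in>{-int (Suc K)..int (Suc K)}. f k) = (\<Sum>k\<in>{-int K..int K}. f k) + f (int K + 1) + f (- int K - 1)"
proof -
  have "{-int (Suc K)..int (Suc K)} = insert (int K + 1) (insert (-int K - 1) {-int K..int K})" by auto
  thus ?thesis by (simp add: algebra_simps)
qed

lemma ln_Suc_minus_ln: "(\<lambda>K::nat. ln (real (Suc K)) - ln (real K)) \<longlonglongrightarrow> 0"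
proof -
  have "(\<lambda>K::nat. ln (1 + 1 / real K)) \<longlonglongrightarrow> ln (1 + 0)"
    by (intro tendsto_intros lim_1_over_n) auto
  hence *: "(\<lambda>K::nat. ln (1 + 1 / real K)) \<longlonglongrightarrow> 0" by simp
  show ?thesis
  proof (rule Lim_transform_eventually[OF *])
    show "\<forall>\<^sub>F K in sequentially. ln (1 + 1 / real K) = ln (real (Suc K)) - ln (real K)"
      using eventually_gt_at_top[of "0::nat"]
    proof eventually_elim
      case (elim K)
      have "1 + 1 / real K = real (Suc K) / real K" using elim by (simp add: field_simps)
      thus ?case using elim by (simp add: ln_div)
    qed
  qed
qed

lemma cot_sum_identity:
  fixes s :: real
  shows "(\<Sum>k\<in>{-int K..int K}. inverse (s - of_int k)) =
         (\<Sum>n<Suc K. inverse (s + of_nat n)) - (\<Sum>n<K. inverse ((1 - s) + of_nat n))"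
proof (induction K)
  case 0
  then show ?case by simp
next
  case (Suc K)
  have "s - of_int (int K + 1) = - ((1 - s) + of_nat K)" by simp
  hence "inverse (s - of_int (int K + 1)) = - inverse ((1 - s) + of_nat K)"
    by (simp only: inverse_minus_eq)
  moreover have "inverse (s - of_int (- int K - 1)) = inverse (s + of_nat (Suc K))"
    by (simp add: algebra_simps)
  ultimately show ?case unfolding sum_sym_Suc Suc.IH by simp
qed

lemma cot_sums:
  fixes s :: real assumes s: "s \<notin> \<int>"
  shows "(\<lambda>K. \<Sum>k\<in>{-int K..int K}. inverse (s - of_int k)) \<longlonglongrightarrow> pi * cos (pi * s) / sin (pi * s)"
proof -
  have s0: "s \<noteq> 0" and s1: "1 - s \<noteq> 0" using s by auto
  define X where "X K = ln (real K) - (\<Sum>n<K. inverse (s + of_nat n))" for K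
  define Y where "Y K = ln (real K) - (\<Sum>n<K. inverse ((1 - s) + of_nat n))" for K
  have X: "(\<lambda>K. X (Suc K)) \<longlonglongrightarrow> Digamma s"
  proof -
    have "X \<longlonglongrightarrow> Digamma s" unfolding X_def using Digamma_LIMSEQ[OF s0] by simp
    thus ?thesis by (rule LIMSEQ_Suc)
  qed
  have Y: "Y \<longlonglongrightarrow> Digamma (1 - s)"
    unfolding Y_def using Digamma_LIMSEQ[OF s1] by simp
  have "(\<lambda>K. Y K - X (Suc K) + (ln (real (Suc K)) - ln (real K))) \<longlonglongrightarrow> Digamma (1 - s) - Digamma s + 0"
    by (intro tendsto_intros X Y ln_Suc_minus_ln)
  also have "(\<lambda>K. Y K - X (Suc K) + (ln (real (Suc K)) - ln (real K))) = (\<lambda>K. \<Sum>k\<in>{-int K..int K}. inverse (s - of_int k))"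
    by (rule ext) (simp add: cot_sum_identity X_def Y_def)
  finally show ?thesis using digamma_reflection[OF s] by simp
qed


definition sg :: "int \<Rightarrow> real" where "sg k = (if even k then 1 else -1)"

lemma sin_pi_diff_int: "sin (pi * (s - of_int k)) = sg k * sin (pi * s)"
proof -
  have "sin (pi * (s - of_int k)) = sin (pi * s) * cos (pi * of_int k) - cos (pi * s) * sin (pi * of_int k)"
    by (simp add: right_diff_distrib sin_diff)
  thus ?thesis by (simp add: sg_def)
qed

lemma sequentially_even_odd':
  assumes E: "eventually (\<lambda>n. P (2 * n)) sequentially" and O: "eventually (\<lambda>n. P (2 * n + 1)) sequentially"
  shows "eventually P sequentially"
proof -
  from E obtain n_e where [intro]: "\<And>n. n \<ge> n_e \<Longrightarrow> P (2 * n)"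
    by (auto simp: eventually_sequentially)
  moreover
  from O obtain n_o where [intro]: "\<And>n. n \<ge> n_o \<Longrightarrow> P (Suc (2 * n))"
    by (auto simp: eventually_sequentially)
  show ?thesis
    unfolding eventually_sequentially
  proof (intro exI allI impI)
    fix n assume "max (2 * n_e) (2 * n_o + 1) \<le> n" then show "P n"
      by (cases "even n") (auto elim!: evenE oddE )
  qed
qed

lemma limseq_even_odd':
  assumes "(\<lambda>n. f (2 * n)) \<longlonglongrightarrow> (l :: 'a :: topological_space)"
      and "(\<lambda>n. f (2 * n + 1)) \<longlonglongrightarrow> l"
  shows "f \<longlonglongrightarrow> l"
  using assms by (auto simp: filterlim_iff intro: sequentially_even_odd')

lemma alt_identity:
  fixes f :: "int \<Rightarrow> real"
  shows "(\<Sum>k\<in>{-int (2*M)..int (2*M)}. sg k * f k) =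
     2 * (\<Sum>j\<in>{-int M..int M}. f (2*j)) - (\<Sum>k\<in>{-int (2*M)..int (2*M)}. f k)"
proof (induction M)
  case 0
  then show ?case by (simp add: sg_def)
next
  case (Suc M)
  have e: "2 * Suc M = Suc (Suc (2 * M))" by simp
  have "sg (int (2*M) + 1) = -1" "sg (- int (2*M) - 1) = -1"
       "sg (int (Suc (2*M)) + 1) = 1" "sg (- int (Suc (2*M)) - 1) = 1"
    by (auto simp: sg_def)
  moreover have "2 * (int M + 1) = int (Suc (2*M)) + 1" "2 * (- int M - 1) = - int (Suc (2*M)) - 1"
    by auto
  ultimately show ?case
    unfolding e sum_sym_Suc Suc.IH by (simp add: algebra_simps) (rule arg_cong[where f=f], simp)
qed

lemma alt_sums:
  fixes s :: real assumes s: "s \<notin> \<int>"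
  shows "(\<lambda>K. \<Sum>k\<in>{-int K..int K}. sg k * inverse (s - of_int k)) \<longlonglongrightarrow> pi / sin (pi * s)"
proof -
  define a where "a K = (\<Sum>k\<in>{-int K..int K}. sg k * inverse (s - of_int k))" for K
  have s2: "s / 2 \<notin> \<int>"
  proof
    assume "s / 2 \<in> \<int>" hence "2 * (s/2) \<in> \<int>" by (intro Ints_mult) auto
    thus False using s by simp
  qed
  have sin1: "sin (pi * s) \<noteq> 0" using s by (auto simp: sin_zero_iff_int2 mult.commute[of pi])
  have sin2: "sin (pi * (s/2)) \<noteq> 0" using s2 by (auto simp: sin_zero_iff_int2 mult.commute[of pi])
  have L1: "(\<lambda>M. \<Sum>j\<in>{-int M..int M}. inverse (s/2 - of_int j)) \<longlonglongrightarrow> pi * cos (pi * (s/2)) / sin (pi * (s/2))"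
    by (rule cot_sums[OF s2])
  have L2: "(\<lambda>M. \<Sum>k\<in>{-int (2*M)..int (2*M)}. inverse (s - of_int k)) \<longlonglongrightarrow> pi * cos (pi * s) / sin (pi * s)"
    using LIMSEQ_subseq_LIMSEQ[OF cot_sums[OF s], of "\<lambda>M. 2*M"] by (simp add: strict_mono_def o_def)
  have eq: "2 * inverse (s - 2 * real_of_int j) = inverse (s/2 - of_int j)" for j :: int
    by (simp add: inverse_eq_divide field_simps)
  have "(\<lambda>M. a (2*M)) = (\<lambda>M. (\<Sum>j\<in>{-int M..int M}. inverse (s/2 - of_int j)) - (\<Sum>k\<in>{-int (2*M)..int (2*M)}. inverse (s - of_int k)))"
    unfolding a_def alt_identity by (simp add: sum_distrib_left eq)
  moreover have "(\<lambda>M. (\<Sum>j\<in>{-int M..int M}. inverse (s/2 - of_int j)) - (\<Sum>k\<in>{-int (2*M)..int (2*M)}. inverse (s - of_int k)))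
     \<longlonglongrightarrow> pi * cos (pi * (s/2)) / sin (pi * (s/2)) - pi * cos (pi * s) / sin (pi * s)"
    by (intro tendsto_intros L1 L2)
  moreover have "pi * cos (pi * (s/2)) / sin (pi * (s/2)) - pi * cos (pi * s) / sin (pi * s) = pi / sin (pi * s)"
  proof -
    have "sin (pi * s / 2) = sin (pi * s) * cos (pi * s / 2) - cos (pi * s) * sin (pi * s / 2)"
      using sin_diff[of "pi * s" "pi * s / 2"] by simp
    thus ?thesis using sin1 sin2 by (simp add: field_simps) algebra
  qed
  ultimately have E: "(\<lambda>M. a (2*M)) \<longlonglongrightarrow> pi / sin (pi * s)" by simp
  have "a (2*M+1) = a (2*M) - (inverse (s - of_int (int (2*M) + 1)) + inverse (s - of_int (- int (2*M) - 1)))" for M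
  proof -
    have "sg (int (2*M) + 1) = -1" "sg (- int (2*M) - 1) = -1" by (auto simp: sg_def)
    hence "a (Suc (2*M)) = a (2*M) - (inverse (s - of_int (int (2*M) + 1)) + inverse (s - of_int (- int (2*M) - 1)))"
      unfolding a_def sum_sym_Suc by simp
    thus ?thesis by simp
  qed
  moreover have "(\<lambda>M. a (2*M) - (inverse (s - of_int (int (2*M) + 1)) + inverse (s - of_int (- int (2*M) - 1))))
       \<longlonglongrightarrow> pi / sin (pi * s) - (0 + 0)"
  proof (intro tendsto_intros E)
    show "(\<lambda>M. inverse (s - real_of_int (int (2 * M) + 1))) \<longlonglongrightarrow> 0" by simp real_asymp
    show "(\<lambda>M. inverse (s - real_of_int (- int (2 * M) - 1))) \<longlonglongrightarrow> 0" by simp real_asymp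
  qed
  ultimately have O: "(\<lambda>M. a (2*M+1)) \<longlonglongrightarrow> pi / sin (pi * s)" by simp
  show ?thesis using limseq_even_odd'[OF E O] unfolding a_def .
qed

lemma sinc_diff_int:
  assumes s: "s \<notin> \<int>"
  shows "sinc (s - of_int k) = sin (pi * s) / pi * (sg k * inverse (s - of_int k))"
proof -
  have "s - of_int k \<noteq> 0" using s by auto
  thus ?thesis unfolding sinc_def using sin_pi_diff_int[of s k] by (simp add: field_simps)
qed

lemma anchor:
  fixes s :: real assumes s: "s \<notin> \<int>"
  shows "(\<lambda>K. \<Sum>k\<in>{-int K..int K}. sinc (s - of_int k)) \<longlonglongrightarrow> 1"
proof -
  have sin1: "sin (pi * s) \<noteq> 0" using s by (auto simp: sin_zero_iff_int2 mult.commute[of pi])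
  have "(\<lambda>K. sin (pi * s) / pi * (\<Sum>k\<in>{-int K..int K}. sg k * inverse (s - of_int k))) \<longlonglongrightarrow> sin (pi * s) / pi * (pi / sin (pi * s))"
    by (intro tendsto_intros alt_sums[OF s])
  thus ?thesis using sin1 by (simp add: sinc_diff_int[OF s] sum_distrib_left)
qed




lemma kernel_identity:
  fixes z :: complex
  shows "cos (of_real pi * z) * (\<Sum>k\<in>{-int K..int K}. of_real (sg k) * exp (2 * of_real pi * \<i> * (z * of_int k)))
       = of_real (sg (int K)) * cos ((2 * of_nat K + 1) * of_real pi * z)"
proof (induction K)
  case 0
  then show ?case by (simp add: sg_def)
next
  case (Suc K)
  define w where "w = 2 * of_real pi * (z * (of_nat K + 1))"
  have sK: "sg (int K + 1) = - sg (int K)" "sg (- int K - 1) = - sg (int K)" "sg (int (Suc K)) = - sg (int K)"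
    by (auto simp: sg_def)
  have e: "exp (2 * of_real pi * \<i> * (z * of_int (int K + 1))) + exp (2 * of_real pi * \<i> * (z * of_int (- int K - 1)))
        = 2 * cos w"
    unfolding cos_exp_eq w_def by (simp add: algebra_simps) (rule arg_cong[where f=exp], simp add: algebra_simps)
  have c: "cos (of_real pi * z) * (2 * cos w) = cos ((2 * of_nat K + 1) * of_real pi * z) + cos ((2 * of_nat (Suc K) + 1) * of_real pi * z)"
  proof -
    have "cos (of_real pi * z) * (2 * cos w) = 2 * (cos w * cos (of_real pi * z))" by simp
    also have "\<dots> = cos (w - of_real pi * z) + cos (w + of_real pi * z)" by (simp add: cos_times_cos)
    also have "w - of_real pi * z = (2 * of_nat K + 1) * of_real pi * z" by (simp add: w_def algebra_simps)
    also have "w + of_real pi * z = (2 * of_nat (Suc K) + 1) * of_real pi * z" by (simp add: w_def algebra_simps)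
    finally show ?thesis .
  qed
  have "cos (of_real pi * z) * (\<Sum>k\<in>{-int (Suc K)..int (Suc K)}. of_real (sg k) * exp (2 * of_real pi * \<i> * (z * of_int k)))
      = cos (of_real pi * z) * (\<Sum>k\<in>{-int K..int K}. of_real (sg k) * exp (2 * of_real pi * \<i> * (z * of_int k)))
        - of_real (sg (int K)) * (cos (of_real pi * z) * (2 * cos w))"
    unfolding sum_sym_Suc sK e[symmetric] by (simp add: algebra_simps)
  also have "\<dots> = of_real (sg (int (Suc K))) * cos ((2 * of_nat (Suc K) + 1) * of_real pi * z)"
    unfolding Suc.IH c sK by (simp add: algebra_simps)
  finally show ?case .
qed




definition hK :: "real \<Rightarrow> nat \<Rightarrow> complex \<Rightarrow> complex" where
  "hK s K z = (\<Sum>k\<in>{-int K..int K}. of_real (sinc (s - of_int k)) * exp (2 * of_real pi * \<i> * (z * (of_int k - of_real s))))"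

definition ww :: "real \<Rightarrow> complex \<Rightarrow> complex" where
  "ww s z = exp (- 2 * of_real pi * \<i> * of_real s * z) / cos (of_real pi * z)"

definition cc :: "real \<Rightarrow> complex" where
  "cc s = - 2 * \<i> * of_real (sin (pi * s))"

lemma term_identity:
  assumes s: "s \<notin> \<int>"
  shows "of_real (sinc (s - of_int k)) * (2 * of_real pi * \<i> * (of_int k - of_real s)) = cc s * of_real (sg k)"
proof -
  have ne: "s - of_int k \<noteq> 0" using s by auto
  hence ne': "complex_of_real s - of_int k \<noteq> 0"
    by (metis of_real_diff of_real_eq_0_iff of_real_of_int_eq)
  have "sinc (s - of_int k) = sin (pi * s) / pi * (sg k / (s - of_int k))"
    unfolding sinc_diff_int[OF s] by (simp add: inverse_eq_divide)
  hence "of_real (sinc (s - of_int k)) = (of_real (sin (pi * s) / pi * (sg k / (s - of_int k))) :: complex)"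
    by simp
  hence "(of_real (sinc (s - of_int k)) :: complex) = of_real (sin (pi * s)) / of_real pi * (of_real (sg k) / (of_real s - of_int k))"
    by simp
  thus ?thesis using ne' by (simp add: cc_def field_simps) algebra
qed

lemma dh:
  assumes s: "s \<notin> \<int>" and cz: "cos (of_real pi * z) \<noteq> 0"
  shows "(hK s K has_field_derivative cc s * of_real (sg (int K)) * ww s z * cos ((2 * of_nat K + 1) * of_real pi * z)) (at z)"
proof -
  have d1: "(hK s K has_field_derivative
     (\<Sum>k\<in>{-int K..int K}. of_real (sinc (s - of_int k)) * (exp (2 * of_real pi * \<i> * (z * (of_int k - of_real s))) * (2 * of_real pi * \<i> * (of_int k - of_real s))))) (at z)"
    unfolding hK_def by (intro DERIV_sum DERIV_cmult) (auto intro!: derivative_eq_intros)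
  moreover have eq2: "(\<Sum>k\<in>{-int K..int K}. of_real (sinc (s - of_int k)) * (exp (2 * of_real pi * \<i> * (z * (of_int k - of_real s))) * (2 * of_real pi * \<i> * (of_int k - of_real s))))
     = cc s * exp (- 2 * of_real pi * \<i> * of_real s * z) * (\<Sum>k\<in>{-int K..int K}. of_real (sg k) * exp (2 * of_real pi * \<i> * (z * of_int k)))"
  proof -
    have "of_real (sinc (s - of_int k)) * (exp (2 * of_real pi * \<i> * (z * (of_int k - of_real s))) * (2 * of_real pi * \<i> * (of_int k - of_real s)))
        = cc s * exp (- 2 * of_real pi * \<i> * of_real s * z) * (of_real (sg k) * exp (2 * of_real pi * \<i> * (z * of_int k)))" for k
    proof -
      have E: "exp (2 * of_real pi * \<i> * (z * (of_int k - of_real s))) = exp (- 2 * of_real pi * \<i> * of_real s * z) * exp (2 * of_real pi * \<i> * (z * of_int k))"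
        by (simp add: exp_add[symmetric] algebra_simps)
      have "of_real (sinc (s - of_int k)) * (exp (2 * of_real pi * \<i> * (z * (of_int k - of_real s))) * (2 * of_real pi * \<i> * (of_int k - of_real s)))
         = (of_real (sinc (s - of_int k)) * (2 * of_real pi * \<i> * (of_int k - of_real s))) * exp (2 * of_real pi * \<i> * (z * (of_int k - of_real s)))"
        by (simp only: mult_ac)
      also have "\<dots> = cc s * of_real (sg k) * (exp (- 2 * of_real pi * \<i> * of_real s * z) * exp (2 * of_real pi * \<i> * (z * of_int k)))"
        by (simp only: term_identity[OF s] E)
      finally show ?thesis by (simp only: mult_ac)
    qed
    thus ?thesis by (simp add: sum_distrib_left)
  qed
  moreover have eq3: "cc s * exp (- 2 * of_real pi * \<i> * of_real s * z) * (\<Sum>k\<in>{-int K..int K}. of_real (sg k) * exp (2 * of_real pi * \<i> * (z * of_int k)))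
      = cc s * of_real (sg (int K)) * ww s z * cos ((2 * of_nat K + 1) * of_real pi * z)"
  proof -
    have S: "(\<Sum>k\<in>{-int K..int K}. of_real (sg k) * exp (2 * of_real pi * \<i> * (z * of_int k)))
       = of_real (sg (int K)) * cos ((2 * of_nat K + 1) * of_real pi * z) / cos (of_real pi * z)"
      using kernel_identity[of z K] cz by (simp add: eq_divide_eq mult.commute)
    show ?thesis unfolding S ww_def using cz by (simp add: field_simps)
  qed
  ultimately show ?thesis by (simp only:)
qed


lemma vector_mvt_bound:
  fixes f :: "real \<Rightarrow> 'a::real_normed_vector"
  assumes "convex S" and d: "\<And>x. x \<in> S \<Longrightarrow> (f has_vector_derivative f' x) (at x within S)"
    and B: "\<And>x. x \<in> S \<Longrightarrow> norm (f' x) \<le> B" and "x \<in> S" "y \<in> S"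
  shows "norm (f x - f y) \<le> B * norm (x - y)"
proof (rule differentiable_bound[OF assms(1), where f' = "\<lambda>x h. h *\<^sub>R f' x"])
  show "(f has_derivative (\<lambda>h. h *\<^sub>R f' x)) (at x within S)" if "x \<in> S" for x
    using d[OF that] by (simp add: has_vector_derivative_def)
  show "onorm (\<lambda>h. h *\<^sub>R f' x) \<le> B" if "x \<in> S" for x
    using onorm_scaleR_left[OF bounded_linear_ident, of "f' x"] onorm_id[where 'a=real] B[OF that] by simp
qed (use assms in auto)

lemma cos_pi_real_ne0:
  assumes "\<bar>x\<bar> < 1/2"
  shows "cos (of_real pi * of_real x :: complex) \<noteq> 0"
proof -
  have x: "-1/2 < x" "x < 1/2" using assms by auto
  have "pi * (-1/2) < pi * x" "pi * x < pi * (1/2)"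
    using x by (intro mult_strict_left_mono; simp)+
  hence "0 < cos (pi * x)" by (intro cos_gt_zero_pi) auto
  moreover have "cos (of_real pi * of_real x :: complex) = of_real (cos (pi * x))"
    by (simp flip: cos_of_real)
  ultimately show ?thesis by simp
qed

definition ww' :: "real \<Rightarrow> complex \<Rightarrow> complex" where
  "ww' s z = (exp (- 2 * of_real pi * \<i> * of_real s * z) * (- 2 * of_real pi * \<i> * of_real s) * cos (of_real pi * z)
             - exp (- 2 * of_real pi * \<i> * of_real s * z) * (- sin (of_real pi * z) * of_real pi))
             / (cos (of_real pi * z) * cos (of_real pi * z))"

lemma dww:
  assumes "cos (of_real pi * z) \<noteq> 0"
  shows "(ww s has_field_derivative ww' s z) (at z)"
  unfolding ww_def ww'_def using assms
  by (intro DERIV_divide) (auto intro!: derivative_eq_intros)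

definition Phi :: "real \<Rightarrow> nat \<Rightarrow> complex \<Rightarrow> complex" where
  "Phi s K z = hK s K z - cc s * of_real (sg (int K)) * (ww s z * sin ((2 * of_nat K + 1) * of_real pi * z)) / ((2 * of_nat K + 1) * of_real pi)"

lemma dPhi:
  assumes s: "s \<notin> \<int>" and cz: "cos (of_real pi * z) \<noteq> 0"
  shows "(Phi s K has_field_derivative
      - cc s * of_real (sg (int K)) * ww' s z * sin ((2 * of_nat K + 1) * of_real pi * z) / ((2 * of_nat K + 1) * of_real pi)) (at z)"
proof -
  define M :: complex where "M = (2 * of_nat K + 1) * of_real pi"
  have M0: "M \<noteq> 0"
  proof -
    have "M = of_real ((2 * real K + 1) * pi)" by (simp add: M_def)
    moreover have "(2 * real K + 1) * pi \<noteq> 0" by (simp add: add_nonneg_eq_0_iff)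
    ultimately show ?thesis by (metis of_real_eq_0_iff)
  qed
  have ds: "((\<lambda>z. sin (M * z)) has_field_derivative cos (M * z) * M) (at z)"
    by (auto intro!: derivative_eq_intros)
  have d2: "((\<lambda>z. cc s * of_real (sg (int K)) * (ww s z * sin ((2 * of_nat K + 1) * of_real pi * z)) / ((2 * of_nat K + 1) * of_real pi))
     has_field_derivative cc s * of_real (sg (int K)) * (ww' s z * sin (M * z) + cos (M * z) * M * ww s z) / M) (at z)"
    unfolding M_def[symmetric]
    by (intro DERIV_cdivide DERIV_cmult DERIV_mult[OF dww[OF cz] ds])
  have "(Phi s K has_field_derivative cc s * of_real (sg (int K)) * ww s z * cos (M * z) -
      cc s * of_real (sg (int K)) * (ww' s z * sin (M * z) + cos (M * z) * M * ww s z) / M) (at z)"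
    unfolding Phi_def using dh[OF s cz, of K] d2 unfolding M_def[symmetric] by (rule DERIV_diff)
  moreover have "cc s * of_real (sg (int K)) * ww s z * cos (M * z) -
      cc s * of_real (sg (int K)) * (ww' s z * sin (M * z) + cos (M * z) * M * ww s z) / M
      = - cc s * of_real (sg (int K)) * ww' s z * sin (M * z) / M"
    using M0 by (simp add: field_simps)
  ultimately show ?thesis unfolding M_def by simp
qed


lemma norm_sin_M_real: "norm (sin ((2 * of_nat K + 1) * of_real pi * of_real x :: complex)) \<le> 1"
proof -
  have "(2 * of_nat K + 1) * of_real pi * of_real x = (of_real ((2 * real K + 1) * pi * x) :: complex)" by simp
  hence "sin ((2 * of_nat K + 1) * of_real pi * of_real x :: complex) = of_real (sin ((2 * real K + 1) * pi * x))"
    by (simp only: sin_of_real)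
  thus ?thesis by simp
qed

lemma norm_M: "norm ((2 * of_nat K + 1) * of_real pi :: complex) = (2 * real K + 1) * pi"
proof -
  have "(2 * of_nat K + 1) * of_real pi = (of_real ((2 * real K + 1) * pi) :: complex)" by simp
  thus ?thesis by (simp only: norm_of_real) simp
qed

lemma norm_sg: "norm (of_real (sg k) :: complex) = 1"
  by (simp add: sg_def)

lemma abs_sg: "\<bar>sg k\<bar> = 1"
  by (simp add: sg_def)

lemma h_diff:
  assumes s: "s \<notin> \<int>" and b: "\<bar>b\<bar> < 1/2"
  shows "(\<lambda>K. hK s K (of_real b) - hK s K 0) \<longlonglongrightarrow> 0"
proof -
  define r where "r = \<bar>b\<bar>"
  define S where "S = {-r..r}"
  have cz: "cos (of_real pi * of_real x :: complex) \<noteq> 0" if "x \<in> S" for x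
    using that b by (intro cos_pi_real_ne0) (auto simp: S_def r_def)
  have "continuous_on S (\<lambda>x. norm (ww' s (of_real x)))"
    unfolding ww'_def using cz by (intro continuous_intros) auto
  moreover have "compact S" "S \<noteq> {}" by (auto simp: S_def r_def)
  ultimately obtain x0 where "x0 \<in> S" "\<forall>y\<in>S. norm (ww' s (of_real y)) \<le> norm (ww' s (of_real x0))"
    using continuous_attains_sup by blast
  then obtain B where B: "\<And>x. x \<in> S \<Longrightarrow> norm (ww' s (of_real x)) \<le> B" by blast
  define C where "C = norm (cc s) * (B * r + norm (ww s (of_real b))) / pi"
  have bS: "b \<in> S" and zS: "0 \<in> S" by (auto simp: S_def r_def)
  have bound: "norm (hK s K (of_real b) - hK s K 0) \<le> C / (2 * real K + 1)" for K
  proof -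
    define M :: complex where "M = (2 * of_nat K + 1) * of_real pi"
    define D where "D x = - cc s * of_real (sg (int K)) * ww' s x * sin (M * x) / M" for x
    have nM: "norm M = (2 * real K + 1) * pi" unfolding M_def by (rule norm_M)
    have Mpos: "(2 * real K + 1) * pi > 0" by simp
    have der: "((\<lambda>x. Phi s K (of_real x)) has_vector_derivative D (of_real x)) (at x within S)" if "x \<in> S" for x
      unfolding D_def M_def using dPhi[OF s cz[OF that], of K] by (rule has_vector_derivative_real_field)
    have Dbound: "norm (D (of_real x)) \<le> norm (cc s) * B / ((2 * real K + 1) * pi)" if "x \<in> S" for x
    proof -
      have "norm (D (of_real x)) = norm (cc s) * norm (ww' s (of_real x)) * norm (sin (M * of_real x)) / ((2 * real K + 1) * pi)"
        unfolding D_def by (simp add: norm_mult norm_divide nM norm_sg abs_sg)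
      also have "\<dots> \<le> norm (cc s) * B * 1 / ((2 * real K + 1) * pi)"
        using B[OF that] norm_sin_M_real[of K x] Mpos order.trans[OF norm_ge_zero B[OF that]] unfolding M_def
        by (intro divide_right_mono mult_mono) auto
      finally show ?thesis by simp
    qed
    have mvt: "norm (Phi s K (of_real b) - Phi s K (of_real 0)) \<le> norm (cc s) * B / ((2 * real K + 1) * pi) * norm (b - 0)"
      by (rule vector_mvt_bound[OF _ der Dbound bS zS]) (auto simp: S_def)
    have eq: "hK s K (of_real b) - hK s K 0 = (Phi s K (of_real b) - Phi s K (of_real 0))
        + cc s * of_real (sg (int K)) * (ww s (of_real b) * sin (M * of_real b)) / M"
      unfolding Phi_def M_def by simp
    have "norm (cc s * of_real (sg (int K)) * (ww s (of_real b) * sin (M * of_real b)) / M)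
        \<le> norm (cc s) * norm (ww s (of_real b)) / ((2 * real K + 1) * pi)"
    proof -
      have "norm (cc s * of_real (sg (int K)) * (ww s (of_real b) * sin (M * of_real b)) / M)
          = norm (cc s) * norm (ww s (of_real b)) * norm (sin (M * of_real b)) / ((2 * real K + 1) * pi)"
        by (simp add: norm_mult norm_divide nM norm_sg abs_sg)
      also have "\<dots> \<le> norm (cc s) * norm (ww s (of_real b)) * 1 / ((2 * real K + 1) * pi)"
        using norm_sin_M_real[of K b] Mpos unfolding M_def
        by (intro divide_right_mono mult_left_mono) auto
      finally show ?thesis by simp
    qed
    hence "norm (hK s K (of_real b) - hK s K 0) \<le> norm (cc s) * B / ((2 * real K + 1) * pi) * \<bar>b\<bar>
        + norm (cc s) * norm (ww s (of_real b)) / ((2 * real K + 1) * pi)"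
      unfolding eq using mvt by (intro order.trans[OF norm_triangle_ineq] add_mono) auto
    also have "\<dots> = C / (2 * real K + 1)"
      unfolding C_def r_def by (simp add: add_divide_distrib ring_distribs divide_divide_eq_left mult_ac)
    finally show ?thesis .
  qed
  show ?thesis
  proof (rule Lim_null_comparison)
    show "\<forall>\<^sub>F K in sequentially. norm (hK s K (of_real b) - hK s K 0) \<le> C / (2 * real K + 1)"
      using bound by simp
    show "(\<lambda>K. C / (2 * real K + 1)) \<longlonglongrightarrow> 0" by real_asymp
  qed
qed




lemma hK0: "hK s K 0 = of_real (\<Sum>k\<in>{-int K..int K}. sinc (s - of_int k))"
  unfolding hK_def by simp

lemma series_limit_nonint:
  assumes s: "s \<notin> \<int>" and b: "\<bar>b\<bar> < 1/2"
  shows "(\<lambda>K. \<Sum>k\<in>{-int K..int K}. exp (2 * of_real pi * \<i> * of_real (b * of_int k)) * of_real (sinc (s - of_int k)))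
          \<longlonglongrightarrow> exp (2 * of_real pi * \<i> * of_real (b * s))"
proof -
  have a: "(\<lambda>K. hK s K 0) \<longlonglongrightarrow> 1"
    unfolding hK0 using tendsto_of_real[OF anchor[OF s], where 'a=complex] by simp
  have "(\<lambda>K. (hK s K (of_real b) - hK s K 0) + hK s K 0) \<longlonglongrightarrow> 0 + 1"
    by (intro tendsto_intros h_diff[OF s b] a)
  hence "(\<lambda>K. exp (2 * of_real pi * \<i> * of_real (b * s)) * hK s K (of_real b)) \<longlonglongrightarrow> exp (2 * of_real pi * \<i> * of_real (b * s)) * 1"
    by (intro tendsto_intros) simp
  moreover have "exp (2 * of_real pi * \<i> * of_real (b * s)) * hK s K (of_real b) =
     (\<Sum>k\<in>{-int K..int K}. exp (2 * of_real pi * \<i> * of_real (b * of_int k)) * of_real (sinc (s - of_int k)))" for K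
    unfolding hK_def sum_distrib_left
  proof (rule sum.cong[OF refl])
    fix k assume "k \<in> {-int K..int K}"
    have "exp (2 * of_real pi * \<i> * of_real (b * s)) * exp (2 * of_real pi * \<i> * (of_real b * (of_int k - of_real s)))
        = exp (2 * of_real pi * \<i> * of_real (b * of_int k))"
      by (simp add: exp_add[symmetric] algebra_simps)
    thus "exp (2 * of_real pi * \<i> * of_real (b * s)) * (of_real (sinc (s - of_int k)) * exp (2 * of_real pi * \<i> * (of_real b * (of_int k - of_real s))))
        = exp (2 * of_real pi * \<i> * of_real (b * of_int k)) * of_real (sinc (s - of_int k))"
      by (simp add: mult_ac)
  qed
  ultimately show ?thesis by simp
qed

lemma series_limit_int:
  fixes m :: int
  shows "(\<lambda>K. \<Sum>k\<in>{-int K..int K}. exp (2 * of_real pi * \<i> * of_real (b * of_int k)) * of_real (sinc (of_int m - of_int k)))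
          \<longlonglongrightarrow> exp (2 * of_real pi * \<i> * of_real (b * of_int m))"
proof (rule tendsto_eventually)
  show "\<forall>\<^sub>F K in sequentially. (\<Sum>k\<in>{-int K..int K}. exp (2 * of_real pi * \<i> * of_real (b * of_int k)) * of_real (sinc (of_int m - of_int k)))
          = exp (2 * of_real pi * \<i> * of_real (b * of_int m))"
    using eventually_ge_at_top[of "nat \<bar>m\<bar>"]
  proof eventually_elim
    case (elim K)
    have t: "exp (2 * of_real pi * \<i> * of_real (b * of_int k)) * of_real (sinc (of_int m - of_int k))
        = (if k = m then exp (2 * of_real pi * \<i> * of_real (b * of_int m)) else 0)" for k
    proof (cases "k = m")
      case False
      have "sin (pi * of_int (m - k)) = 0" by (rule sin_npi_int)
      hence "sinc (of_int m - of_int k) = 0" using False by (simp add: sinc_def)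
      thus ?thesis using False by simp
    qed (simp add: sinc_def)
    have "m \<in> {-int K..int K}" using elim by auto
    thus ?case unfolding t by (simp add: sum.delta')
  qed
qed

lemma series_limit:
  assumes b: "\<bar>b\<bar> < 1/2"
  shows "(\<lambda>K. \<Sum>k\<in>{-int K..int K}. exp (2 * of_real pi * \<i> * of_real (b * of_int k)) * of_real (sinc (s - of_int k)))
          \<longlonglongrightarrow> exp (2 * of_real pi * \<i> * of_real (b * s))"
proof (cases "s \<in> \<int>")
  case True
  then obtain m where "s = of_int m" by (auto elim: Ints_cases)
  thus ?thesis using series_limit_int[of b m] by simp
qed (use series_limit_nonint b in auto)


lemma norm_exp2pi: "norm (exp (2 * of_real pi * \<i> * of_real y)) = 1"
proof -
  have "2 * of_real pi * \<i> * of_real y = \<i> * of_real (2 * pi * y)" by simp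
  thus ?thesis by (simp only: norm_exp_i_times)
qed

lemma exp2pi_int: "exp (2 * of_real pi * \<i> * of_int j) = 1"
proof -
  have "2 * of_real pi * \<i> * of_int j = \<i> * (of_int j * (of_real pi * 2))" by simp
  thus ?thesis by (simp only: exp_2pi_1_int)
qed

lemma sinc_bound: assumes "y \<noteq> 0" shows "\<bar>sinc y\<bar> \<le> 1 / (pi * \<bar>y\<bar>)"
proof -
  have "\<bar>sinc y\<bar> = \<bar>sin (pi * y)\<bar> / (pi * \<bar>y\<bar>)" using assms by (simp add: sinc_def abs_mult)
  also have "\<dots> \<le> 1 / (pi * \<bar>y\<bar>)" using assms by (intro divide_right_mono abs_sin_le_one) auto
  finally show ?thesis .
qed

lemma extra_bound:
  fixes s N :: real and X :: "int set"
  assumes X: "X \<subseteq> {k. -N - 1 \<le> of_int k \<and> of_int k < 1 - N}" and N: "N > 2 + \<bar>s\<bar>"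
  shows "norm (\<Sum>k\<in>X. exp (2 * of_real pi * \<i> * of_real (b * of_int k)) * of_real (sinc (s - of_int k)))
         \<le> 2 * (1 / (pi * (N - 1 - \<bar>s\<bar>)))"
proof -
  define Y where "Y = {\<lceil>-N - 1\<rceil>..<\<lceil>-N - 1\<rceil> + 2}"
  have XY: "X \<subseteq> Y"
  proof
    fix k assume "k \<in> X"
    hence k: "-N - 1 \<le> of_int k" "of_int k < 1 - N" using X by auto
    have "\<lceil>-N - 1\<rceil> \<le> k" using k(1) by (intro ceiling_le) simp
    moreover have "k < \<lceil>-N - 1\<rceil> + 2"
    proof -
      have "of_int k < -N - 1 + 2" using k(2) by simp
      also have "-N - 1 \<le> of_int \<lceil>-N - 1\<rceil>" by (rule le_of_int_ceiling)
      finally show ?thesis by linarith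
    qed
    ultimately show "k \<in> Y" by (simp add: Y_def)
  qed
  have fY: "finite Y" and cY: "card Y = 2" by (simp_all add: Y_def)
  have fX: "finite X" using XY fY finite_subset by blast
  have cX: "card X \<le> 2" using card_mono[OF fY XY] cY by simp
  have tb: "norm (exp (2 * of_real pi * \<i> * of_real (b * of_int k)) * of_real (sinc (s - of_int k))) \<le> 1 / (pi * (N - 1 - \<bar>s\<bar>))"
    if "k \<in> X" for k
  proof -
    have k: "of_int k < 1 - N" using that X by auto
    have d: "N - 1 - \<bar>s\<bar> \<le> \<bar>s - of_int k\<bar>" using k by linarith
    have pos: "0 < N - 1 - \<bar>s\<bar>" using N by simp
    have "norm (exp (2 * of_real pi * \<i> * of_real (b * of_int k)) * of_real (sinc (s - of_int k))) = \<bar>sinc (s - of_int k)\<bar>"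
      by (simp add: norm_mult norm_exp2pi)
    also have "\<dots> \<le> 1 / (pi * \<bar>s - of_int k\<bar>)" using d pos by (intro sinc_bound) auto
    also have "\<dots> \<le> 1 / (pi * (N - 1 - \<bar>s\<bar>))" using d pos
      by (intro divide_left_mono mult_left_mono mult_pos_pos) auto
    finally show ?thesis .
  qed
  have "norm (\<Sum>k\<in>X. exp (2 * of_real pi * \<i> * of_real (b * of_int k)) * of_real (sinc (s - of_int k)))
      \<le> (\<Sum>k\<in>X. norm (exp (2 * of_real pi * \<i> * of_real (b * of_int k)) * of_real (sinc (s - of_int k))))"
    by (rule norm_sum)
  also have "\<dots> \<le> of_nat (card X) * (1 / (pi * (N - 1 - \<bar>s\<bar>)))"
    by (rule sum_bounded_above) (use tb in auto)
  also have "\<dots> \<le> 2 * (1 / (pi * (N - 1 - \<bar>s\<bar>)))"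
    using cX N by (intro mult_right_mono) auto
  finally show ?thesis .
qed


lemma filterlim_K: "filterlim (\<lambda>N::real. nat \<lfloor>N - r\<rfloor>) at_top at_top"
  unfolding filterlim_at_top
proof
  fix Z :: nat
  show "\<forall>\<^sub>F N in at_top. Z \<le> nat \<lfloor>N - r\<rfloor>"
    using eventually_ge_at_top[of "real Z + r"]
  proof eventually_elim
    case (elim N)
    hence "of_int (int Z) \<le> N - r" by simp
    hence "int Z \<le> \<lfloor>N - r\<rfloor>" by (simp only: le_floor_iff)
    thus ?case by simp
  qed
qed

lemma partial_limit:
  assumes ab: "a = b + of_int n" and b: "\<bar>b\<bar> < 1/2" and r: "0 \<le> r" "r < 1"
  shows "((\<lambda>N. \<Sum>k\<in>{k::int. -N \<le> r + of_int k \<and> r + of_int k \<le> N}.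
            exp (2 * of_real pi * \<i> * of_real (a * (r + of_int k))) * of_real (sinc (t - (r + of_int k))))
          \<longlongrightarrow> exp (2 * of_real pi * \<i> * of_real (b * t + of_int n * r))) at_top"
proof -
  define s where "s = t - r"
  define g where "g k = exp (2 * of_real pi * \<i> * of_real (b * of_int k)) * of_real (sinc (s - of_int k))" for k :: int
  define c0 where "c0 = exp (2 * of_real pi * \<i> * of_real (a * r))"
  define A where "A N = {k::int. -N \<le> r + of_int k \<and> r + of_int k \<le> N}" for N :: real
  define K where "K N = nat \<lfloor>N - r\<rfloor>" for N :: real
  define T where "T M = (\<Sum>k\<in>{-int M..int M}. g k)" for M
  define E where "E N = (\<Sum>k\<in>A N - {-int (K N)..int (K N)}. g k)" for N
  have trm: "exp (2 * of_real pi * \<i> * of_real (a * (r + of_int k))) * of_real (sinc (t - (r + of_int k))) = c0 * g k" for k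
  proof -
    have "2 * of_real pi * \<i> * of_real (a * (r + of_int k)) =
        2 * of_real pi * \<i> * of_real (a * r) + 2 * of_real pi * \<i> * of_real (b * of_int k) + 2 * of_real pi * \<i> * of_int (n * k)"
      unfolding ab by (simp add: algebra_simps)
    hence "exp (2 * of_real pi * \<i> * of_real (a * (r + of_int k))) = c0 * exp (2 * of_real pi * \<i> * of_real (b * of_int k))"
      unfolding c0_def by (simp only: exp_add exp2pi_int) simp
    thus ?thesis unfolding g_def s_def by (simp add: algebra_simps)
  qed
  have split: "(\<Sum>k\<in>A N. exp (2 * of_real pi * \<i> * of_real (a * (r + of_int k))) * of_real (sinc (t - (r + of_int k))))
      = c0 * (T (K N) + E N)" if N: "N \<ge> 1" for N
  proof -
    have Kle: "of_int (int (K N)) \<le> N - r" using N r unfolding K_def by simp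
    have sub: "{-int (K N)..int (K N)} \<subseteq> A N"
    proof
      fix k assume "k \<in> {-int (K N)..int (K N)}"
      hence "- of_int (int (K N)) \<le> (of_int k :: real)" "(of_int k :: real) \<le> of_int (int (K N))" by auto
      thus "k \<in> A N" using Kle r unfolding A_def by auto
    qed
    have fin: "finite (A N)"
    proof (rule finite_subset)
      show "A N \<subseteq> {-\<lceil>N\<rceil> - 1..\<lceil>N\<rceil>}"
      proof
        fix k assume "k \<in> A N"
        hence k: "-N \<le> r + of_int k" "r + of_int k \<le> N" unfolding A_def by auto
        have c: "N \<le> of_int \<lceil>N\<rceil>" by (rule le_of_int_ceiling)
        have "of_int (-\<lceil>N\<rceil> - 1) \<le> (of_int k :: real)" using k r c by (simp only: of_int_diff of_int_minus of_int_1)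
        moreover have "(of_int k :: real) \<le> of_int \<lceil>N\<rceil>" using k r c by linarith
        ultimately show "k \<in> {-\<lceil>N\<rceil> - 1..\<lceil>N\<rceil>}" by (simp only: of_int_le_iff atLeastAtMost_iff)
      qed
    qed simp
    have "(\<Sum>k\<in>A N. exp (2 * of_real pi * \<i> * of_real (a * (r + of_int k))) * of_real (sinc (t - (r + of_int k))))
        = c0 * (\<Sum>k\<in>A N. g k)" unfolding sum_distrib_left by (rule sum.cong[OF refl trm])
    also have "(\<Sum>k\<in>A N. g k) = E N + T (K N)"
      unfolding E_def T_def by (rule sum.subset_diff[OF sub fin])
    finally show ?thesis by (simp add: add.commute)
  qed
  have Xsub: "A N - {-int (K N)..int (K N)} \<subseteq> {k. -N - 1 \<le> of_int k \<and> of_int k < 1 - N}" if N: "N \<ge> 1" for N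
  proof
    fix k assume k: "k \<in> A N - {-int (K N)..int (K N)}"
    hence k1: "-N \<le> r + of_int k" "r + of_int k \<le> N" unfolding A_def by auto
    have "k \<le> \<lfloor>N - r\<rfloor>" using k1 by (simp add: le_floor_iff)
    hence "k \<le> int (K N)" using N r unfolding K_def by simp
    hence "k < - int (K N)" using k by auto
    moreover have "N - r < of_int \<lfloor>N - r\<rfloor> + 1" by linarith
    moreover have "of_int \<lfloor>N - r\<rfloor> = real (K N)" using N r unfolding K_def by simp
    ultimately have "of_int k < r - N" by linarith
    thus "k \<in> {k. -N - 1 \<le> of_int k \<and> of_int k < 1 - N}" using k1 r by auto
  qed
  have Tlim: "((\<lambda>N. T (K N)) \<longlongrightarrow> exp (2 * of_real pi * \<i> * of_real (b * s))) at_top"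
    unfolding T_def g_def K_def by (rule filterlim_compose[OF series_limit[OF b] filterlim_K])
  have Elim: "(E \<longlongrightarrow> 0) at_top"
  proof (rule Lim_null_comparison)
    show "\<forall>\<^sub>F N in at_top. norm (E N) \<le> 2 * (1 / (pi * (N - 1 - \<bar>s\<bar>)))"
      using eventually_gt_at_top[of "2 + \<bar>s\<bar>"]
    proof eventually_elim
      case (elim N)
      thus ?case unfolding E_def g_def by (intro extra_bound Xsub) auto
    qed
    show "((\<lambda>N. 2 * (1 / (pi * (N - 1 - \<bar>s\<bar>)))) \<longlongrightarrow> 0) at_top" by real_asymp
  qed
  have "((\<lambda>N. c0 * (T (K N) + E N)) \<longlongrightarrow> c0 * (exp (2 * of_real pi * \<i> * of_real (b * s)) + 0)) at_top"
    by (intro tendsto_intros Tlim Elim)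
  moreover have "c0 * (exp (2 * of_real pi * \<i> * of_real (b * s)) + 0) = exp (2 * of_real pi * \<i> * of_real (b * t + of_int n * r))"
  proof -
    have "a * r + b * s = b * t + of_int n * r" unfolding s_def ab by (simp add: algebra_simps)
    hence "2 * of_real pi * \<i> * of_real (a * r) + 2 * of_real pi * \<i> * of_real (b * s) = 2 * of_real pi * \<i> * (of_real (b * t + of_int n * r) :: complex)"
      by (metis distrib_left of_real_add)
    thus ?thesis unfolding c0_def by (simp flip: exp_add)
  qed
  ultimately have "((\<lambda>N. c0 * (T (K N) + E N)) \<longlongrightarrow> exp (2 * of_real pi * \<i> * of_real (b * t + of_int n * r))) at_top"
    by simp
  moreover have "\<forall>\<^sub>F N in at_top. c0 * (T (K N) + E N) = (\<Sum>k\<in>A N. exp (2 * of_real pi * \<i> * of_real (a * (r + of_int k))) * of_real (sinc (t - (r + of_int k))))"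
    using eventually_ge_at_top[of "1::real"] by eventually_elim (rule split[symmetric])
  ultimately show ?thesis unfolding A_def by (rule Lim_transform_eventually)
qed




lemma rho_cyl: "rho (cyl p) = p - of_int \<lfloor>p\<rfloor>"
  unfolding rho_def
proof (rule the_equality)
  show "p - of_int \<lfloor>p\<rfloor> \<in> cyl p \<and> 0 \<le> p - of_int \<lfloor>p\<rfloor> \<and> p - of_int \<lfloor>p\<rfloor> < 1"
    unfolding cyl_def by (auto intro: Ints_minus) linarith
next
  fix r assume r: "r \<in> cyl p \<and> 0 \<le> r \<and> r < 1"
  then obtain j where j: "r - p = of_int j" unfolding cyl_def by (auto elim: Ints_cases)
  have "j = - \<lfloor>p\<rfloor>"
  proof -
    have "of_int (- j) \<le> p" "p < of_int (- j) + 1" using j r by linarith+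
    thus ?thesis by (metis floor_unique minus_minus)
  qed
  thus "r = p - of_int \<lfloor>p\<rfloor>" using j by simp
qed

lemma cyl_alt: "cyl p = {\<tau>. \<tau> - (p - of_int \<lfloor>p\<rfloor>) \<in> \<int>}"
proof -
  have "\<tau> - p \<in> \<int> \<longleftrightarrow> \<tau> - (p - of_int \<lfloor>p\<rfloor>) \<in> \<int>" for \<tau>
  proof
    show "\<tau> - p \<in> \<int> \<Longrightarrow> \<tau> - (p - of_int \<lfloor>p\<rfloor>) \<in> \<int>"
    proof -
      assume h: "\<tau> - p \<in> \<int>"
      have "(\<tau> - p) + of_int \<lfloor>p\<rfloor> \<in> \<int>" using h by (rule Ints_add[OF _ Ints_of_int])
      thus ?thesis by (simp add: algebra_simps)
    qed
  next
    assume "\<tau> - (p - of_int \<lfloor>p\<rfloor>) \<in> \<int>"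
    hence "\<tau> - (p - of_int \<lfloor>p\<rfloor>) - of_int \<lfloor>p\<rfloor> \<in> \<int>" by (rule Ints_diff[OF _ Ints_of_int])
    thus "\<tau> - p \<in> \<int>" by (simp add: algebra_simps)
  qed
  thus ?thesis unfolding cyl_def by blast
qed

lemma partial_reindex:
  fixes f :: "real \<Rightarrow> complex"
  shows "(\<Sum>\<tau>\<in>{\<tau>. \<tau> - r \<in> \<int>} \<inter> {-N..N}. f \<tau>) = (\<Sum>k\<in>{k::int. -N \<le> r + of_int k \<and> r + of_int k \<le> N}. f (r + of_int k))"
proof -
  have eq: "{\<tau>. \<tau> - r \<in> \<int>} \<inter> {-N..N} = (\<lambda>k. r + of_int k) ` {k::int. -N \<le> r + of_int k \<and> r + of_int k \<le> N}"
  proof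
    show "{\<tau>. \<tau> - r \<in> \<int>} \<inter> {-N..N} \<subseteq> (\<lambda>k. r + of_int k) ` {k::int. -N \<le> r + of_int k \<and> r + of_int k \<le> N}"
    proof
      fix \<tau> assume "\<tau> \<in> {\<tau>. \<tau> - r \<in> \<int>} \<inter> {-N..N}"
      then obtain k where "\<tau> - r = of_int k" "-N \<le> \<tau>" "\<tau> \<le> N" by (auto elim: Ints_cases)
      thus "\<tau> \<in> (\<lambda>k. r + of_int k) ` {k::int. -N \<le> r + of_int k \<and> r + of_int k \<le> N}"
        by (intro image_eqI[of _ _ k]) auto
    qed
  qed auto
  have inj: "inj_on (\<lambda>k::int. r + of_int k) A" for A by (rule inj_onI) simp
  show ?thesis unfolding eq by (simp add: sum.reindex[OF inj])
qed

theorem mainTheorem3: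
  fixes a b :: real and n :: int
  assumes "a = b + of_int n" and "-1/2 < b" and "b < 1/2"
  defines "x \<equiv> (\<lambda>t::real. exp (2 * complex_of_real pi * \<i> * complex_of_real (a * t)))"
  shows "(\<forall>t::real. \<forall>\<phi>\<in>torus.
            (whittaker_partial x t \<phi> \<longlongrightarrow>
               exp (2 * complex_of_real pi * \<i> * complex_of_real (b * t + of_int n * rho \<phi>))) at_top
          \<and> whittaker x t \<phi> =
               exp (2 * complex_of_real pi * \<i> * complex_of_real (b * t + of_int n * rho \<phi>)))
       \<and> (\<forall>v \<alpha> t::real. whittaker x (v * t) (cyl (\<alpha> * t)) =
               exp (2 * complex_of_real pi * \<i> * complex_of_real ((b * v + of_int n * \<alpha>) * t)))"
proof -
  have b: "\<bar>b\<bar> < 1/2" using assms(2,3) by auto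
  have part1: "(whittaker_partial x t (cyl p) \<longlongrightarrow>
               exp (2 * complex_of_real pi * \<i> * complex_of_real (b * t + of_int n * rho (cyl p)))) at_top
          \<and> whittaker x t (cyl p) =
               exp (2 * complex_of_real pi * \<i> * complex_of_real (b * t + of_int n * rho (cyl p)))" for t p
  proof -
    define r where "r = p - of_int \<lfloor>p\<rfloor>"
    have r: "0 \<le> r" "r < 1" unfolding r_def by linarith+
    have "whittaker_partial x t (cyl p) = (\<lambda>N. \<Sum>k\<in>{k::int. -N \<le> r + of_int k \<and> r + of_int k \<le> N}.
            exp (2 * of_real pi * \<i> * of_real (a * (r + of_int k))) * of_real (sinc (t - (r + of_int k))))"
      unfolding whittaker_partial_def cyl_alt r_def[symmetric] x_def by (rule ext) (rule partial_reindex)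
    hence L: "(whittaker_partial x t (cyl p) \<longlongrightarrow> exp (2 * complex_of_real pi * \<i> * complex_of_real (b * t + of_int n * rho (cyl p)))) at_top"
      using partial_limit[OF assms(1) b r, of t] by (simp add: rho_cyl r_def)
    moreover have "whittaker x t (cyl p) = exp (2 * complex_of_real pi * \<i> * complex_of_real (b * t + of_int n * rho (cyl p)))"
      unfolding whittaker_def using L by (intro tendsto_Lim) auto
    ultimately show ?thesis by blast
  qed
  have A: "\<forall>t::real. \<forall>\<phi>\<in>torus.
            (whittaker_partial x t \<phi> \<longlongrightarrow>
               exp (2 * complex_of_real pi * \<i> * complex_of_real (b * t + of_int n * rho \<phi>))) at_top
          \<and> whittaker x t \<phi> =
               exp (2 * complex_of_real pi * \<i> * complex_of_real (b * t + of_int n * rho \<phi>))"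
    unfolding torus_def using part1 by blast
  have B: "whittaker x (v * t) (cyl (\<alpha> * t)) =
               exp (2 * complex_of_real pi * \<i> * complex_of_real ((b * v + of_int n * \<alpha>) * t))" for v \<alpha> t
  proof -
    have "whittaker x (v * t) (cyl (\<alpha> * t)) = exp (2 * complex_of_real pi * \<i> * complex_of_real (b * (v * t) + of_int n * rho (cyl (\<alpha> * t))))"
      using part1 by blast
    also have "b * (v * t) + of_int n * rho (cyl (\<alpha> * t)) = (b * v + of_int n * \<alpha>) * t + of_int (- n * \<lfloor>\<alpha> * t\<rfloor>)"
      by (simp add: rho_cyl algebra_simps)
    also have "exp (2 * complex_of_real pi * \<i> * complex_of_real ((b * v + of_int n * \<alpha>) * t + of_int (- n * \<lfloor>\<alpha> * t\<rfloor>)))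
        = exp (2 * complex_of_real pi * \<i> * complex_of_real ((b * v + of_int n * \<alpha>) * t)) * exp (2 * complex_of_real pi * \<i> * of_int (- n * \<lfloor>\<alpha> * t\<rfloor>))"
      by (simp add: exp_add[symmetric] distrib_left del: of_int_mult of_int_minus)
    also have "\<dots> = exp (2 * complex_of_real pi * \<i> * complex_of_real ((b * v + of_int n * \<alpha>) * t))"
      by (simp only: exp2pi_int mult_1_right)
    finally show ?thesis .
  qed
  show ?thesis using A B by blast
qed


end
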